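(* There exists a $\mathbb{Z}[t^{\pm 1/2}]$-algebra isomorphism $\widetilde{\Phi}_{\mathrm{A}\to \mathrm{B}}\colon \mathcal{K}_{t, \mathcal{Q}'_{2n-1}}\to \mathcal{K}_{t, \mathcal{Q}_{2n-2}^{\flat}}$ given by $\widetilde{\Phi}_{\mathrm{B}}\circ \widetilde{\Phi}_{\mathrm{A}}^{-1}$. Moreover, this restricts to a bijection from $\widetilde{\mathbf{S}}^{\xi'}=\{L_t^{\mathrm{A}}(m)\mid m\in \mathbb{B}^{\xi'}\}$ to $\widetilde{\mathbf{S}}^{\xi, \flat}=\{L_t(m)\mid m\in \mathbb{B}^{\xi, \flat}\}$.
   Context: Fix $n\geq 2$ and $q\in\mathbb{C}^\times$ not a root of unity. Let $\mathcal{Q}'_{2n-1}$ be a Dynkin quiver of type $\mathrm{A}_{2n-1}$ with an associated height function $\xi'$ (i.e. $\xi'(j)=\xi'(i)+1$ whenever there is an arrow $i\to j$). Let $\mathbb{B}^{\xi'}$ be the set of dominant monomials in the variables $Y_{i,r}$ with $(i,r)$ running over the labelling (via $\xi'$) of the vertices of the Auslander–Reiten quiver of $\mathcal{Q}'_{2n-1}$, and let $\mathcal{K}_{t, \mathcal{Q}'_{2n-1}}=\bigoplus_{m\in\mathbb{B}^{\xi'}}\mathbb{Z}[t^{\pm1/2}]L_t^{\mathrm{A}}(m)$ be the quantum Grothendieck ring of the Hernandez–Leclerc subcategory $\mathcal{C}_{\mathcal{Q}'_{2n-1}}$ of finite-dimensional modules over the quantum loop algebra of type $\mathrm{A}_{2n-1}^{(1)}$,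 where $L_t^{\mathrm{A}}(m)$ is the $(q,t)$-character of the simple module $L(m)$. Let $\mathcal{Q}_{2n-2}$ be a Dynkin quiver of type $\mathrm{A}_{2n-2}$ with an associated height function $\xi$, let $\flat\in\{>,<\}$, let $\mathbb{B}^{\xi,\flat}$ be the set of dominant monomials in the variables $Y_{i,r}$ with $(i,r)$ in the labelling $\overline{I}_{\xi}^{\mathrm{tw},\flat}$ of the twisted Auslander–Reiten quiver $\Upsilon_{[\mathcal{Q}_{2n-2}^\flat]}$, and let $\mathcal{K}_{t, \mathcal{Q}_{2n-2}^{\flat}}=\bigoplus_{m\in\mathbb{B}^{\xi,\flat}}\mathbb{Z}[t^{\pm1/2}]L_t(m)$ be the quantum Grothendieck ring of the corresponding monoidal subcategory $\mathcal{C}_{\mathcal{Q}_{2n-2}^{\flat}}$ of finite-dimensional modules over the quantum loop algebra of type $\mathrm{B}_n^{(1)}$, with $L_t(m)$ the $(q,t)$-character of $L(m)$. Let $\mathcal{A}_v[N_-^{\mathrm{A}_{2n-1}}]$ be the quantized coordinate algebra of type $\mathrm{A}_{2n-1}$ with normalized dual canonical basis $\widetilde{\mathbf{B}}^{\mathrm{up}}$. Let $\widetilde{\Phi}_{\mathrm{A}}\colon\mathcal{A}_v[N_-^{\mathrm{A}_{2n-1}}]\to\mathcal{K}_{t, \mathcal{Q}'_{2n-1}}$ be the Hernandez–Leclerc $\mathbb{Z}$-algebra isomorphism ($v^{\pm1/2}\mapsto t^{\mp1/2}$, normalized unipotent quantum minors $\mapsto$ $(q,t)$-characters of Kirillov–Reshetikhin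 modules), which maps $\widetilde{\mathbf{B}}^{\mathrm{up}}$ bijectively onto $\{L_t^{\mathrm{A}}(m)\mid m\in \mathbb{B}^{\xi'}\}$, and let $\widetilde{\Phi}_{\mathrm{B}}\colon\mathcal{A}_v[N_-^{\mathrm{A}_{2n-1}}]\to\mathcal{K}_{t, \mathcal{Q}_{2n-2}^{\flat}}$ be the $\mathbb{Z}$-algebra isomorphism (with $v^{\pm1/2}\mapsto t^{\mp1/2}$) constructed in the paper, which maps $\widetilde{\mathbf{B}}^{\mathrm{up}}$ bijectively onto $\{L_t(m)\mid m\in \mathbb{B}^{\xi, \flat}\}$. *)

theory Defs
  imports Main
begin

text \<open>The quantum coordinate algebra and the two
quantum Grothendieck rings are modelled as (possibly noncommutative) unital rings
carrying a scalar action of a commutative coefficient ring (standing for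
Z[v^(+-1/2)] resp. Z[t^(+-1/2)]).\<close>

definition ring_iso :: "('a::ring_1 \<Rightarrow> 'b::ring_1) \<Rightarrow> bool" where
  "ring_iso f \<longleftrightarrow> bij f \<and> (\<forall>x y. f (x + y) = f x + f y)
     \<and> (\<forall>x y. f (x * y) = f x * f y) \<and> f 1 = 1"

definition is_algebra :: "('r::comm_ring_1 \<Rightarrow> 'a::ring_1 \<Rightarrow> 'a) \<Rightarrow> bool" where
  "is_algebra sm \<longleftrightarrow>
     (\<forall>x. sm 1 x = x) \<and>
     (\<forall>c d x. sm (c * d) x = sm c (sm d x)) \<and>
     (\<forall>c d x. sm (c + d) x = sm c x + sm d x) \<and>
     (\<forall>c x y. sm c (x + y) = sm c x + sm c y) \<and>
     (\<forall>c x y. sm c (x * y) = sm c x * y) \<and>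
     (\<forall>c x y. sm c (x * y) = x * sm c y)"

text \<open>A ring isomorphism which is semilinear along the coefficient map tau
(e.g. tau: v^(+-1/2) maps to t^(-+1/2)). With tau = id this is an algebra isomorphism.\<close>
definition semilinear_iso ::
  "('r \<Rightarrow> 'a::ring_1 \<Rightarrow> 'a) \<Rightarrow> ('s \<Rightarrow> 'b::ring_1 \<Rightarrow> 'b) \<Rightarrow> ('r \<Rightarrow> 's)
     \<Rightarrow> ('a \<Rightarrow> 'b) \<Rightarrow> bool" where
  "semilinear_iso smA smB \<tau> f \<longleftrightarrow> ring_iso f \<and> (\<forall>c x. f (smA c x) = smB (\<tau> c) (f x))"

definition algebra_iso ::
  "('r \<Rightarrow> 'a::ring_1 \<Rightarrow> 'a) \<Rightarrow> ('r \<Rightarrow> 'b::ring_1 \<Rightarrow> 'b) \<Rightarrow> ('a \<Rightarrow> 'b) \<Rightarrow> bool" where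
  "algebra_iso smA smB f \<longleftrightarrow> semilinear_iso smA smB id f"

end

theory Submission
  imports Defs
begin

theorem theorem12p2:
  fixes smN :: "'v::comm_ring_1 \<Rightarrow> 'a::ring_1 \<Rightarrow> 'a"
    and smA :: "'r::comm_ring_1 \<Rightarrow> 'k1::ring_1 \<Rightarrow> 'k1"
    and smB :: "'r \<Rightarrow> 'k2::ring_1 \<Rightarrow> 'k2"
    and \<tau> :: "'v \<Rightarrow> 'r"
    and PhiA :: "'a \<Rightarrow> 'k1" and PhiB :: "'a \<Rightarrow> 'k2"
    and Bup :: "'a set" and SA :: "'k1 set" and SB :: "'k2 set"
  assumes "is_algebra smN" and "is_algebra smA" and "is_algebra smB"
    and "ring_iso \<tau>"
    and "semilinear_iso smN smA \<tau> PhiA"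
    and "semilinear_iso smN smB \<tau> PhiB"
    and "bij_betw PhiA Bup SA"
    and "bij_betw PhiB Bup SB"
  shows "algebra_iso smA smB (PhiB \<circ> inv PhiA)
         \<and> bij_betw (PhiB \<circ> inv PhiA) SA SB"
proof -
  let ?f = "PhiB \<circ> inv PhiA"
  have tA: "bij \<tau>" using assms(4) by (simp add: ring_iso_def)
  have A: "bij PhiA" "\<And>x y. PhiA (x + y) = PhiA x + PhiA y" "\<And>x y. PhiA (x * y) = PhiA x * PhiA y"
    "PhiA 1 = 1" "\<And>c x. PhiA (smN c x) = smA (\<tau> c) (PhiA x)"
    using assms(5) by (auto simp: semilinear_iso_def ring_iso_def)
  have B: "bij PhiB" "\<And>x y. PhiB (x + y) = PhiB x + PhiB y" "\<And>x y. PhiB (x * y) = PhiB x * PhiB y"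
    "PhiB 1 = 1" "\<And>c x. PhiB (smN c x) = smB (\<tau> c) (PhiB x)"
    using assms(6) by (auto simp: semilinear_iso_def ring_iso_def)
  have iA: "\<And>y. PhiA (inv PhiA y) = y" using A(1) by (simp add: bij_is_surj surj_f_inv_f)
  have iA2: "\<And>x. inv PhiA (PhiA x) = x" using A(1) by (simp add: bij_is_inj)
  have bijf: "bij ?f" using A(1) B(1) by (simp add: bij_comp bij_imp_bij_inv)
  have add: "\<And>x y. ?f (x + y) = ?f x + ?f y"
  proof -
    fix x y
    have "x + y = PhiA (inv PhiA x + inv PhiA y)" by (simp add: A(2) iA)
    then show "?f (x + y) = ?f x + ?f y" by (simp add: iA2 B(2))
  qed
  have mul: "\<And>x y. ?f (x * y) = ?f x * ?f y"
  proof -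
    fix x y
    have "x * y = PhiA (inv PhiA x * inv PhiA y)" by (simp add: A(3) iA)
    then show "?f (x * y) = ?f x * ?f y" by (simp add: iA2 B(3))
  qed
  have one: "?f 1 = 1" using A(4) B(4) iA2 by (metis comp_apply)
  have sm: "\<And>c x. ?f (smA c x) = smB (id c) (?f x)"
  proof -
    fix c x
    obtain d where d: "c = \<tau> d" using tA by (metis bij_pointE)
    have "smA c x = PhiA (smN d (inv PhiA x))" by (simp add: A(5) d iA)
    then show "?f (smA c x) = smB (id c) (?f x)" by (simp add: iA2 B(5) d)
  qed
  have bb: "bij_betw ?f SA SB"
  proof -
    have "bij_betw (inv_into Bup PhiA) SA Bup" using assms(7) by (rule bij_betw_inv_into)
    moreover have "\<And>y. y \<in> SA \<Longrightarrow> inv_into Bup PhiA y = inv PhiA y"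
      using assms(7) A(1) by (metis bij_betw_imp_surj_on bij_is_inj f_inv_into_f inv_f_f)
    ultimately have "bij_betw (inv PhiA) SA Bup" using bij_betw_cong by blast
    then show ?thesis using assms(8) by (rule bij_betw_trans)
  qed
  show ?thesis unfolding algebra_iso_def semilinear_iso_def ring_iso_def
    using bijf add mul one sm bb by blast
qed

end
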